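(* Let $G\subset GL(V)$ be a reflection group. The following are equivalent: (1) $\ell(g)=\operatorname{codim}(g)$ for every $g\in G$; (2) $\ell(g)=\operatorname{codim}(g)$ for every codimension atom $g\in G$; (3) every codimension atom of $G$ is a reflection; (4) for every $g\neq 1$ in $G$ there exists a reflection $s\in G$ such that $\operatorname{codim}(gs)<\operatorname{codim}(g)$.
   Context: $V$ is a finite-dimensional vector space of dimension $n$ over $\mathbb{R}$ or $\mathbb{C}$. A reflection is an element of $GL(V)$ of finite order fixing a hyperplane pointwise; a reflection group is a finite subgroup of $GL(V)$ generated by reflections. $\ell(g)$ is the minimal number of reflections of $G$ whose product is $g$ ($\ell(1)=0$). $\operatorname{codim}(g)=n-\dim\{v\in V:gv=v\}$. The codimension order is the partial order on $G$ given by $a\le_\perp c$ iff $\operatorname{codim}(a)+\operatorname{codim}(a^{-1}c)=\operatorname{codim}(c)$; a codimension atom is an element covering the identity $1$ (the minimum) in this poset. *)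

theory Defs
  imports "HOL-Analysis.Analysis"
begin

text \<open>V = 'k^'n with 'k a real normed field (i.e. R or C up to isomorphism),
  n = CARD('n). Elements of GL(V) are invertible n x n matrices acting by *v.\<close>

definition fixspace :: "'k::field^'n^'n \<Rightarrow> ('k^'n) set" where
  "fixspace g = {v. g *v v = v}"

definition codim :: "'k::field^'n^'n \<Rightarrow> nat" where
  "codim g = CARD('n) - vec.dim (fixspace g)"

definition mpow :: "'k::field^'n^'n \<Rightarrow> nat \<Rightarrow> 'k^'n^'n" where
  "mpow g k = (((**) g) ^^ k) (mat 1)"

definition has_finite_order :: "'k::field^'n^'n \<Rightarrow> bool" where
  "has_finite_order g \<longleftrightarrow> (\<exists>k>0. mpow g k = mat 1)"

definition is_reflection :: "'k::field^'n^'n \<Rightarrow> bool" where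
  "is_reflection g \<longleftrightarrow> invertible g \<and> g \<noteq> mat 1 \<and> has_finite_order g \<and>
     (\<exists>H. vec.subspace H \<and> vec.dim H = CARD('n) - 1 \<and> (\<forall>v\<in>H. g *v v = v))"

inductive_set gen_group :: "('k::field^'n^'n) set \<Rightarrow> ('k^'n^'n) set" for R where
  gen_one: "mat 1 \<in> gen_group R"
| gen_base: "r \<in> R \<Longrightarrow> r \<in> gen_group R"
| gen_mult: "a \<in> gen_group R \<Longrightarrow> b \<in> gen_group R \<Longrightarrow> a ** b \<in> gen_group R"
| gen_inv: "a \<in> gen_group R \<Longrightarrow> matrix_inv a \<in> gen_group R"

definition reflections :: "('k::field^'n^'n) set \<Rightarrow> ('k^'n^'n) set" where
  "reflections G = {s\<in>G. is_reflection s}"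

definition is_matrix_group :: "('k::field^'n^'n) set \<Rightarrow> bool" where
  "is_matrix_group G \<longleftrightarrow> (\<forall>g\<in>G. invertible g) \<and> mat 1 \<in> G \<and>
     (\<forall>a\<in>G. \<forall>b\<in>G. a ** b \<in> G) \<and> (\<forall>a\<in>G. matrix_inv a \<in> G)"

definition reflection_group :: "('k::field^'n^'n) set \<Rightarrow> bool" where
  "reflection_group G \<longleftrightarrow> finite G \<and> is_matrix_group G \<and>
     G = gen_group {s\<in>G. is_reflection s}"

definition refl_length :: "('k::field^'n^'n) set \<Rightarrow> 'k^'n^'n \<Rightarrow> nat" where
  "refl_length G g = (LEAST k. \<exists>l. length l = k \<and> set l \<subseteq> reflections G \<and> foldr (**) l (mat 1) = g)"

definition codim_le :: "'k::field^'n^'n \<Rightarrow> 'k^'n^'n \<Rightarrow> bool" where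
  "codim_le a c \<longleftrightarrow> codim a + codim (matrix_inv a ** c) = codim c"

definition codim_atom :: "('k::field^'n^'n) set \<Rightarrow> 'k^'n^'n \<Rightarrow> bool" where
  "codim_atom G g \<longleftrightarrow> g \<in> G \<and> g \<noteq> mat 1 \<and> codim_le (mat 1) g \<and>
     \<not> (\<exists>h\<in>G. h \<noteq> mat 1 \<and> h \<noteq> g \<and> codim_le (mat 1) h \<and> codim_le h g)"

end

theory Submission imports Defs begin

type_synonym ('k,'n) M = "'k^'n^'n"

lemma inv_props:
  fixes A :: "'k::field^'n^'n"
  assumes "invertible A"
  shows "A ** matrix_inv A = mat 1" "matrix_inv A ** A = mat 1"
proof -
  have "\<exists>A'. A ** A' = mat 1 \<and> A' ** A = mat 1" using assms unfolding invertible_def by blast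
  hence "A ** matrix_inv A = mat 1 \<and> matrix_inv A ** A = mat 1"
    unfolding matrix_inv_def by (rule someI_ex)
  thus "A ** matrix_inv A = mat 1" "matrix_inv A ** A = mat 1" by auto
qed

lemma inv_unique:
  fixes A B :: "'k::field^'n^'n"
  assumes "invertible A" "B ** A = mat 1"
  shows "matrix_inv A = B"
proof -
  have "B = B ** (A ** matrix_inv A)" using inv_props(1)[OF assms(1)] by (simp add: matrix_mul_rid)
  also have "\<dots> = matrix_inv A" by (simp add: matrix_mul_assoc assms(2) matrix_mul_lid)
  finally show ?thesis by simp
qed

lemma invertible_inv:
  fixes A :: "'k::field^'n^'n"
  assumes "invertible A" shows "invertible (matrix_inv A)"
  using inv_props[OF assms] unfolding invertible_def by blast

lemma inv_mat1: "matrix_inv (mat 1 :: 'k::field^'n^'n) = mat 1"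
  by (rule inv_unique) (auto simp: invertible_def matrix_mul_lid)

lemma inv_mult:
  fixes A B :: "'k::field^'n^'n"
  assumes "invertible A" "invertible B"
  shows "matrix_inv (A ** B) = matrix_inv B ** matrix_inv A"
proof (rule inv_unique)
  show "invertible (A ** B)" using assms by (rule invertible_mult)
  have "matrix_inv B ** matrix_inv A ** (A ** B) = matrix_inv B ** (matrix_inv A ** A) ** B"
    by (simp add: matrix_mul_assoc)
  also have "\<dots> = mat 1" using inv_props[OF assms(1)] inv_props[OF assms(2)]
    by (simp add: matrix_mul_lid)
  finally show "matrix_inv B ** matrix_inv A ** (A ** B) = mat 1" .
qed

lemma inv_inv:
  fixes A :: "'k::field^'n^'n"
  assumes "invertible A" shows "matrix_inv (matrix_inv A) = A"
  by (rule inv_unique[OF invertible_inv[OF assms]]) (rule inv_props(1)[OF assms])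

lemma fixspace_subspace: "vec.subspace (fixspace (g::'k::field^'n^'n))"
  unfolding vec.subspace_def fixspace_def
  by (auto simp: matrix_vector_right_distrib vector_scalar_commute)

lemma dim_fix_le: "vec.dim (fixspace (g::'k::field^'n^'n)) \<le> CARD('n)"
  by (rule dim_subset_UNIV_cart_gen)

lemma codim_mat1: "codim (mat 1 :: 'k::field^'n^'n) = 0"
proof -
  have "fixspace (mat 1 :: 'k::field^'n^'n) = UNIV" by (auto simp: fixspace_def)
  thus ?thesis unfolding codim_def by (simp only: vec_dim_card)
qed

lemma codim0:
  fixes g :: "'k::field^'n^'n"
  assumes "codim g = 0" shows "g = mat 1"
proof -
  have "vec.dim (fixspace g) = CARD('n)" using assms dim_fix_le[of g] by (simp add: codim_def)
  hence "vec.span (fixspace g) = UNIV"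
    by (metis vec.dim_eq_full vec.dimension_def vec_dim_card vec.dim_UNIV)
  hence "fixspace g = UNIV" using fixspace_subspace[of g] by (metis vec.span_eq_iff)
  thus ?thesis by (auto simp: fixspace_def matrix_eq)
qed

lemma codim_mult:
  fixes a b :: "'k::field^'n^'n"
  shows "codim (a ** b) \<le> codim a + codim b"
proof -
  let ?S = "{x + y |x y. x \<in> fixspace a \<and> y \<in> fixspace b}"
  have e: "vec.dim ?S + vec.dim (fixspace a \<inter> fixspace b) = vec.dim (fixspace a) + vec.dim (fixspace b)"
    by (rule vec.dim_sums_Int[OF fixspace_subspace fixspace_subspace])
  have "fixspace a \<inter> fixspace b \<subseteq> fixspace (a ** b)"
    by (auto simp: fixspace_def matrix_vector_mul_assoc[symmetric])
  hence "vec.dim (fixspace a \<inter> fixspace b) \<le> vec.dim (fixspace (a ** b))" by (rule vec.dim_subset)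
  moreover have "vec.dim ?S \<le> CARD('n)" by (rule dim_subset_UNIV_cart_gen)
  ultimately show ?thesis using e dim_fix_le[of a] dim_fix_le[of b] dim_fix_le[of "a ** b"]
    unfolding codim_def by linarith
qed

lemma fix_inv:
  fixes g :: "'k::field^'n^'n"
  assumes "invertible g" shows "fixspace (matrix_inv g) = fixspace g"
proof -
  have "g *v v = v \<longleftrightarrow> matrix_inv g *v v = v" for v
  proof
    assume "g *v v = v"
    hence "matrix_inv g *v v = matrix_inv g *v (g *v v)" by simp
    also have "\<dots> = v" using inv_props(2)[OF assms] by (simp add: matrix_vector_mul_assoc)
    finally show "matrix_inv g *v v = v" .
  next
    assume "matrix_inv g *v v = v"
    hence "g *v v = g *v (matrix_inv g *v v)" by simp
    also have "\<dots> = v" using inv_props(1)[OF assms] by (simp add: matrix_vector_mul_assoc)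
    finally show "g *v v = v" .
  qed
  thus ?thesis by (auto simp: fixspace_def)
qed

lemma codim_inv:
  fixes g :: "'k::field^'n^'n"
  assumes "invertible g" shows "codim (matrix_inv g) = codim g"
  using fix_inv[OF assms] by (simp add: codim_def)

lemma codim_refl:
  fixes s :: "'k::field^'n^'n"
  assumes "is_reflection s" shows "codim s = 1"
proof -
  obtain H where H: "vec.subspace H" "vec.dim H = CARD('n) - 1" "\<forall>v\<in>H. s *v v = v"
    using assms unfolding is_reflection_def by blast
  have "H \<subseteq> fixspace s" using H(3) by (auto simp: fixspace_def)
  hence "vec.dim H \<le> vec.dim (fixspace s)" by (rule vec.dim_subset)
  hence "codim s \<le> 1" using H(2) by (simp add: codim_def)
  moreover have "codim s \<noteq> 0" using codim0[of s] assms by (auto simp: is_reflection_def)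
  ultimately show ?thesis by simp
qed

lemma mpow_Suc: "mpow g (Suc k) = g ** mpow g k"
  by (simp add: mpow_def)

lemma mpow_Suc': "mpow (g::'k::field^'n^'n) (Suc k) = mpow g k ** g"
proof (induction k)
  case 0 thus ?case by (simp add: mpow_def matrix_mul_lid matrix_mul_rid)
next
  case (Suc k)
  have "mpow g (Suc (Suc k)) = g ** (mpow g k ** g)" using Suc by (simp add: mpow_Suc)
  also have "\<dots> = mpow g (Suc k) ** g" by (simp add: mpow_Suc matrix_mul_assoc)
  finally show ?case .
qed

lemma mpow_inv:
  fixes s :: "'k::field^'n^'n"
  assumes "invertible s" shows "mpow (matrix_inv s) k ** mpow s k = mat 1"
proof (induction k)
  case 0 thus ?case by (simp add: mpow_def matrix_mul_lid)
next
  case (Suc k)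
  have "mpow (matrix_inv s) (Suc k) ** mpow s (Suc k)
      = matrix_inv s ** (mpow (matrix_inv s) k ** mpow s k) ** s"
    by (simp only: mpow_Suc[of "matrix_inv s"] mpow_Suc'[of s] matrix_mul_assoc)
  also have "\<dots> = mat 1" using Suc inv_props(2)[OF assms] by (simp add: matrix_mul_rid)
  finally show ?case .
qed

lemma refl_inv:
  fixes s :: "'k::field^'n^'n"
  assumes "is_reflection s" shows "is_reflection (matrix_inv s)"
proof -
  have inv: "invertible s" using assms by (simp add: is_reflection_def)
  obtain k where k: "k > 0" "mpow s k = mat 1" using assms
    by (auto simp: is_reflection_def has_finite_order_def)
  have "mpow (matrix_inv s) k = mat 1" using mpow_inv[OF inv, of k] k(2) by (simp add: matrix_mul_rid)
  hence fo: "has_finite_order (matrix_inv s)" using k(1) by (auto simp: has_finite_order_def)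
  have ne: "matrix_inv s \<noteq> mat 1" using inv_inv[OF inv] inv_mat1 assms
    by (metis is_reflection_def)
  obtain H where H: "vec.subspace H" "vec.dim H = CARD('n) - 1" "\<forall>v\<in>H. s *v v = v"
    using assms unfolding is_reflection_def by blast
  have "\<forall>v\<in>H. matrix_inv s *v v = v" using H(3) fix_inv[OF inv] by (auto simp: fixspace_def)
  thus ?thesis using H fo ne invertible_inv[OF inv] unfolding is_reflection_def by blast
qed


abbreviation mprod :: "('k::field^'n^'n) list \<Rightarrow> 'k^'n^'n" where
  "mprod l \<equiv> foldr (**) l (mat 1)"

lemma foldr_mult: "foldr (**) xs (B::'k::field^'n^'n) = mprod xs ** B"
  by (induction xs) (simp_all add: matrix_mul_lid matrix_mul_assoc)

lemma mprod_append: "mprod (xs @ ys) = mprod xs ** mprod (ys::('k::field^'n^'n) list)"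
proof -
  have "mprod (xs @ ys) = foldr (**) xs (mprod ys)" by simp
  also have "\<dots> = mprod xs ** mprod ys" by (rule foldr_mult)
  finally show ?thesis .
qed

lemma mprod_snoc: "mprod (xs @ [y]) = mprod xs ** (y::'k::field^'n^'n)"
  using mprod_append[of xs "[y]"] by (simp add: matrix_mul_rid)

lemma invertible_mat1: "invertible (mat 1 :: 'k::field^'n^'n)"
  by (auto simp: invertible_def matrix_mul_lid)

lemma invertible_mprod: "\<forall>s\<in>set l. invertible s \<Longrightarrow> invertible (mprod (l::('k::field^'n^'n) list))"
  by (induction l) (auto simp: invertible_mat1 invertible_mult)

lemma inv_mprod: "\<forall>s\<in>set l. invertible s \<Longrightarrow>
   matrix_inv (mprod (l::('k::field^'n^'n) list)) = mprod (rev (map matrix_inv l))"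
proof (induction l)
  case Nil thus ?case by (simp add: inv_mat1)
next
  case (Cons s l)
  thus ?case by (simp add: inv_mult invertible_mprod mprod_snoc del: foldr_append)
qed

lemma codim_mprod:
  assumes "set l \<subseteq> reflections G"
  shows "codim (mprod (l::('k::field^'n^'n) list)) \<le> length l"
  using assms
proof (induction l)
  case Nil thus ?case by (simp add: codim_mat1)
next
  case (Cons s l)
  have "codim (mprod (s # l)) \<le> codim s + codim (mprod l)" by (simp add: codim_mult)
  moreover have "codim s = 1" using Cons.prems by (simp add: reflections_def codim_refl)
  ultimately show ?case using Cons by simp
qed

context
  fixes G :: "('k::field^'n^'n) set"
  assumes RG: "reflection_group G"
begin

lemma G_inv: "g \<in> G \<Longrightarrow> invertible g"
  using RG by (auto simp: reflection_group_def is_matrix_group_def)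
lemma G_mult: "a \<in> G \<Longrightarrow> b \<in> G \<Longrightarrow> a ** b \<in> G"
  using RG by (auto simp: reflection_group_def is_matrix_group_def)
lemma G_minv: "a \<in> G \<Longrightarrow> matrix_inv a \<in> G"
  using RG by (auto simp: reflection_group_def is_matrix_group_def)
lemma G_one: "mat 1 \<in> G"
  using RG by (auto simp: reflection_group_def is_matrix_group_def)

lemma refls_inv: "s \<in> reflections G \<Longrightarrow> matrix_inv s \<in> reflections G"
  by (auto simp: reflections_def G_minv refl_inv)

lemma decomp: "g \<in> G \<Longrightarrow> \<exists>l. set l \<subseteq> reflections G \<and> mprod l = g"
proof -
  assume g: "g \<in> G"
  have eq: "gen_group {s\<in>G. is_reflection s} = G" using RG unfolding reflection_group_def by (elim conjE) (rule sym)
  have "g \<in> gen_group {s\<in>G. is_reflection s}" using g by (simp only: eq)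
  thus ?thesis
  proof (induction rule: gen_group.induct)
    case gen_one
    show ?case by (rule exI[of _ "[]"]) simp
  next
    case (gen_base r)
    show ?case by (rule exI[of _ "[r]"]) (use gen_base in \<open>auto simp: reflections_def matrix_mul_rid\<close>)
  next
    case (gen_mult a b)
    then obtain la lb where "set la \<subseteq> reflections G" "mprod la = a" "set lb \<subseteq> reflections G" "mprod lb = b"
      by blast
    thus ?case by (intro exI[of _ "la @ lb"]) (simp add: mprod_append del: foldr_append)
  next
    case (gen_inv a)
    then obtain la where la: "set la \<subseteq> reflections G" "mprod la = a" by blast
    have "\<forall>s\<in>set la. invertible s"
    proof
      fix s assume "s \<in> set la"
      hence "s \<in> G" using la(1) by (auto simp: reflections_def)
      thus "invertible s" by (rule G_inv)
    qed
    hence "matrix_inv (mprod la) = mprod (rev (map matrix_inv la))" by (rule inv_mprod)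
    hence "matrix_inv a = mprod (rev (map matrix_inv la))" by (simp only: la(2))
    moreover have "set (rev (map matrix_inv la)) \<subseteq> reflections G"
    proof
      fix x assume "x \<in> set (rev (map matrix_inv la))"
      then obtain s where s: "s \<in> set la" "x = matrix_inv s" by auto
      have "s \<in> reflections G" using s(1) la(1) by (rule subsetD[rotated])
      thus "x \<in> reflections G" unfolding s(2) by (rule refls_inv)
    qed
    ultimately show ?case
      apply (intro exI[of _ "rev (map matrix_inv la)"] conjI)
       apply assumption
      apply (rule sym)
      apply assumption
      done
  qed
qed

lemma RL_ex: "g \<in> G \<Longrightarrow> \<exists>l. length l = refl_length G g \<and> set l \<subseteq> reflections G \<and> mprod l = g"
proof -
  assume "g \<in> G"
  then obtain l where "set l \<subseteq> reflections G" "mprod l = g" using decomp by blast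
  hence "\<exists>k. \<exists>l. length l = k \<and> set l \<subseteq> reflections G \<and> mprod l = g" by blast
  thus ?thesis unfolding refl_length_def by (rule LeastI_ex)
qed

lemma RL_le: "set l \<subseteq> reflections G \<Longrightarrow> mprod l = g \<Longrightarrow> refl_length G g \<le> length l"
  unfolding refl_length_def by (rule Least_le) blast

lemma RL_ge: "g \<in> G \<Longrightarrow> codim g \<le> refl_length G g"
proof -
  assume g: "g \<in> G"
  obtain l where l: "length l = refl_length G g" "set l \<subseteq> reflections G" "mprod l = g"
    using RL_ex[OF g] by blast
  have "codim (mprod l) \<le> length l" using codim_mprod[OF l(2)] .
  thus ?thesis using l by simp
qed

end

lemma codim_le_trans:
  fixes a b c :: "'k::field^'n^'n"
  assumes "invertible a" "invertible b" "codim_le a b" "codim_le b c"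
  shows "codim_le a c"
proof -
  have e1: "matrix_inv a ** c = (matrix_inv a ** b) ** (matrix_inv b ** c)"
  proof -
    have "(matrix_inv a ** b) ** (matrix_inv b ** c) = matrix_inv a ** ((b ** matrix_inv b) ** c)"
      by (simp only: matrix_mul_assoc)
    also have "\<dots> = matrix_inv a ** c" using inv_props(1)[OF assms(2)] by (simp add: matrix_mul_lid)
    finally show ?thesis by (rule sym)
  qed
  have e2: "a ** (matrix_inv a ** c) = c"
    using inv_props(1)[OF assms(1)] by (simp add: matrix_mul_assoc matrix_mul_lid)
  have "codim c \<le> codim a + codim (matrix_inv a ** c)" using codim_mult[of a "matrix_inv a ** c"] by (simp only: e2)
  moreover have "codim (matrix_inv a ** c) \<le> codim (matrix_inv a ** b) + codim (matrix_inv b ** c)"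
    by (subst e1) (rule codim_mult)
  ultimately show ?thesis using assms(3,4) unfolding codim_le_def by linarith
qed


lemma codim_le_one: "codim_le (mat 1) (h::'k::field^'n^'n)"
  by (simp add: codim_le_def inv_mat1 matrix_mul_lid codim_mat1)

theorem mainTheorem4:
  fixes G :: "('k::real_normed_field^'n^'n) set"
  assumes "reflection_group G"
  shows "((\<forall>g\<in>G. refl_length G g = codim g)
            \<longleftrightarrow> (\<forall>g\<in>G. codim_atom G g \<longrightarrow> refl_length G g = codim g))
       \<and> ((\<forall>g\<in>G. codim_atom G g \<longrightarrow> refl_length G g = codim g)
            \<longleftrightarrow> (\<forall>g\<in>G. codim_atom G g \<longrightarrow> is_reflection g))
       \<and> ((\<forall>g\<in>G. codim_atom G g \<longrightarrow> is_reflection g)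
            \<longleftrightarrow> (\<forall>g\<in>G. g \<noteq> mat 1 \<longrightarrow> (\<exists>s\<in>reflections G. codim (g ** s) < codim g)))"
proof -
  note RG = assms
  let ?P1 = "\<forall>g\<in>G. refl_length G g = codim g"
  let ?P2 = "\<forall>g\<in>G. codim_atom G g \<longrightarrow> refl_length G g = codim g"
  let ?P3 = "\<forall>g\<in>G. codim_atom G g \<longrightarrow> is_reflection g"
  let ?P4 = "\<forall>g\<in>G. g \<noteq> mat 1 \<longrightarrow> (\<exists>s\<in>reflections G. codim (g ** s) < codim g)"
  have 12: "?P1 \<Longrightarrow> ?P2" by blast
  have 23: "?P2 \<Longrightarrow> ?P3"
  proof (intro ballI impI)
    fix g assume P2: ?P2 and g: "g \<in> G" and at: "codim_atom G g"
    have rl: "refl_length G g = codim g" using P2 g at by blast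
    obtain l where l: "length l = codim g" "set l \<subseteq> reflections G" "mprod l = g"
      using RL_ex[OF RG g] rl by metis
    have "g \<noteq> mat 1" using at by (simp add: codim_atom_def)
    hence "l \<noteq> []" using l(3) by auto
    then obtain s t where st: "l = s # t" by (cases l) auto
    have s: "s \<in> G" "is_reflection s" using l(2) st by (auto simp: reflections_def)
    show "is_reflection g"
    proof (cases "t = []")
      case True thus ?thesis using st l(3) s by (simp add: matrix_mul_rid)
    next
      case False
      have inv_s: "invertible s" using s by (simp add: is_reflection_def)
      have gst: "g = s ** mprod t" using l(3) st by simp
      have e: "matrix_inv s ** g = mprod t"
        using gst inv_props(2)[OF inv_s] by (simp add: matrix_mul_assoc matrix_mul_lid)
      have c1: "codim s = 1" using s codim_refl by blast
      have ct: "codim (mprod t) \<le> length t" using l(2) st codim_mprod[of t G] by auto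
      have cg: "codim g \<le> codim s + codim (mprod t)" using gst codim_mult by metis
      have lenl: "codim g = Suc (length t)" using l(1) st by simp
      have le: "codim_le s g" unfolding codim_le_def e using c1 ct cg lenl by linarith
      have "s \<noteq> mat 1" using s by (simp add: is_reflection_def)
      moreover have "s \<noteq> g" using c1 lenl False by auto
      ultimately show ?thesis using at s(1) le codim_le_one[of s] unfolding codim_atom_def by blast
    qed
  qed
  have 34: "?P3 \<Longrightarrow> ?P4"
  proof (intro ballI impI)
    fix g assume P3: ?P3 and g: "g \<in> G" and g1: "g \<noteq> mat 1"
    have ig: "invertible g" using G_inv[OF RG g] .
    define x where "x = matrix_inv g"
    have x: "x \<in> G" "invertible x" using G_minv[OF RG g] invertible_inv[OF ig] by (auto simp: x_def)
    have x1: "x \<noteq> mat 1" using g1 inv_inv[OF ig] inv_mat1 by (metis x_def)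
    define S where "S = {h\<in>G. h \<noteq> mat 1 \<and> codim_le h x}"
    have "x \<in> S" using x x1 inv_props(2)[OF x(2)]
      by (simp add: S_def codim_le_def codim_mat1)
    then obtain h where h: "h \<in> S" and hmin: "\<forall>h'. h' \<in> S \<longrightarrow> codim h \<le> codim h'"
      using ex_has_least_nat[of "\<lambda>h. h \<in> S" x codim] by blast
    have hG: "h \<in> G" "h \<noteq> mat 1" "codim_le h x" using h by (auto simp: S_def)
    have "codim_atom G h"
      unfolding codim_atom_def
    proof (intro conjI notI)
      show "h \<in> G" "codim_le (mat 1) h" using hG codim_le_one by auto
      show "h = mat 1 \<Longrightarrow> False" using hG by simp
    next
      assume "\<exists>h'\<in>G. h' \<noteq> mat 1 \<and> h' \<noteq> h \<and> codim_le (mat 1) h' \<and> codim_le h' h"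
      then obtain h' where h': "h' \<in> G" "h' \<noteq> mat 1" "h' \<noteq> h" "codim_le h' h" by blast
      have ih': "invertible h'" using G_inv[OF RG h'(1)] .
      have "codim_le h' x" using codim_le_trans[OF ih' G_inv[OF RG hG(1)] h'(4) hG(3)] .
      hence "h' \<in> S" using h' by (simp add: S_def)
      hence "codim h \<le> codim h'" using hmin by blast
      hence "codim (matrix_inv h' ** h) = 0" using h'(4) by (simp add: codim_le_def)
      hence "matrix_inv h' ** h = mat 1" by (rule codim0)
      hence e0: "h' ** (matrix_inv h' ** h) = h'" by (simp add: matrix_mul_rid)
      have "h = (h' ** matrix_inv h') ** h" by (simp add: inv_props(1)[OF ih'] matrix_mul_lid)
      hence "h = h'" using e0 by (simp add: matrix_mul_assoc)
      thus False using h'(3) by simp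
    qed
    hence rs: "is_reflection h" using P3 hG(1) by blast
    have ih: "invertible h" using rs by (simp add: is_reflection_def)
    have "codim h + codim (matrix_inv h ** x) = codim x" using hG(3) by (simp add: codim_le_def)
    moreover have "matrix_inv h ** x = matrix_inv (g ** h)" using inv_mult[OF ig ih] x_def by simp
    moreover have "codim (matrix_inv (g ** h)) = codim (g ** h)"
      using codim_inv invertible_mult[OF ig ih] by blast
    moreover have "codim x = codim g" using codim_inv[OF ig] x_def by simp
    moreover have "codim h = 1" using codim_refl[OF rs] .
    ultimately have "codim (g ** h) < codim g" by simp
    moreover have "h \<in> reflections G" using rs hG by (simp add: reflections_def)
    ultimately show "\<exists>s\<in>reflections G. codim (g ** s) < codim g" by blast
  qed
  have 41: "?P4 \<Longrightarrow> ?P1"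
  proof -
    assume P4: ?P4
    have "\<forall>g\<in>G. codim g = m \<longrightarrow> refl_length G g = m" for m
    proof (induction m rule: less_induct)
      case (less m)
      show ?case
      proof (intro ballI impI)
        fix g assume g: "g \<in> G" and cm: "codim g = m"
        show "refl_length G g = m"
        proof (cases "g = mat 1")
          case True
          have "refl_length G g \<le> length ([] :: ('k^'n^'n) list)"
            by (rule RL_le[OF RG]) (use True in auto)
          thus ?thesis using cm True by (simp add: codim_mat1)
        next
          case False
          then obtain s where s: "s \<in> reflections G" "codim (g ** s) < codim g" using P4 g by blast
          have sG: "s \<in> G" "is_reflection s" using s by (auto simp: reflections_def)
          have isv: "invertible s" using sG by (simp add: is_reflection_def)
          have gsG: "g ** s \<in> G" using G_mult[OF RG g sG(1)] .
          have IH: "refl_length G (g ** s) = codim (g ** s)" using less s(2) cm gsG by blast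
          obtain l where l: "length l = refl_length G (g ** s)" "set l \<subseteq> reflections G" "mprod l = g ** s"
            using RL_ex[OF RG gsG] by blast
          have "mprod (l @ [matrix_inv s]) = g ** s ** matrix_inv s" using l(3) by (simp add: mprod_snoc del: foldr_append)
          also have "\<dots> = g" using inv_props(1)[OF isv] by (simp add: matrix_mul_assoc[symmetric] matrix_mul_rid)
          finally have "refl_length G g \<le> length (l @ [matrix_inv s])"
            using RL_le[OF RG, of "l @ [matrix_inv s]" g] l(2) refls_inv[OF RG s(1)] by auto
          hence a: "refl_length G g \<le> codim (g ** s) + 1" using l(1) IH by simp
          have b: "codim g \<le> refl_length G g" using RL_ge[OF RG g] .
          show ?thesis using a b s(2) cm by linarith
        qed
      qed
    qed
    thus ?P1 by blast
  qed
  show ?thesis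
    apply (intro conjI iffI)
    apply (erule 12)
    apply (erule 41[OF 34[OF 23]])
    apply (erule 23)
    apply (erule 12[OF 41[OF 34]])
    apply (erule 34)
    apply (erule 23[OF 12[OF 41]])
    done
qed

end
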